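(* Let $M$ be a Spiky CRMDP with underlying MDP $\dot M = (\mathcal{S},\mathcal{A},T,R)$, and define the reward lower Lipschitz bound $\underline{R}(x) = \max_{y\in\mathcal{S}_n}\big(R(y) - d(x,y)\big)$ for $x\in\mathcal{S}$. Suppose there exists a policy $\pi^*$ that is optimal for $\dot M$ (i.e. with respect to the reward $R$) such that the trajectories $\tau\sim\pi^*$ it generates contain no corrupt states. Then every policy that is optimal with respect to the reward function $\underline{R}$ is also optimal for $\dot M$ (i.e. with respect to $R$).
   Context: A Corrupt Reward MDP (CRMDP) is a finite-state Markov decision process $(\mathcal{S}, \mathcal{A}, T, R)$ (the underlying MDP) with state set $\mathcal{S}$, action set $\mathcal{A}$, transition function $T$ and (true) reward function $R\colon \mathcal{S}\to\mathbb{R}$, together with an additional corrupt reward function $C\colon \mathcal{S} \to \mathbb{R}$. The set of non-corrupt states is $\mathcal{S}_n = \{x \in \mathcal{S} : R(x) = C(x)\}$ and the set of corrupt states is $\mathcal{S}_c = \mathcal{S}\setminus \mathcal{S}_n$. A Spiky CRMDP is a CRMDP together with a metric $d\colon \mathcal{S}\times\mathcal{S}\to[0,\infty)$ and a function $\mathrm{LV}\colon \mathcal{P}(\mathcal{S})\times\mathcal{S}\to[0,\infty)$, written $(A,x)\mapsto \mathrm{LV}_A(x)$, non-decreasing with respect to set inclusion in $A$, such that: (1) $\mathcal{S}_n$ is nonempty; (2) $|R(x)-R(y)|\le d(x,y)$ for all $x,y\in\mathcal{S}$; (3) for every $x\in\mathcal{S}_c$, $\mathrm{LV}_{\mathcal{S}_n}(x)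 > \sup_{y\in\mathcal{S}_n}\mathrm{LV}_{\mathcal{S}}(y)$. A policy $\pi$ generates random trajectories $\tau\sim\pi$, viewed as (finite) sequences of states; for a reward function $r\colon\mathcal{S}\to\mathbb{R}$, the value of $\pi$ is $\mathbb{E}_{\tau\sim\pi}\sum_{x\in\tau} r(x)$ (sum over the states of the trajectory, with multiplicity), assumed finite, and $\pi$ is optimal with respect to $r$ if it maximizes this value over all policies. *)

theory Defs
  imports "HOL-Probability.Probability"
begin

definition is_metric :: "('s \<Rightarrow> 's \<Rightarrow> real) \<Rightarrow> bool" where
  "is_metric d \<longleftrightarrow>
     (\<forall>x y. d x y \<ge> 0) \<and> (\<forall>x y. d x y = 0 \<longleftrightarrow> x = y) \<and>
     (\<forall>x y. d x y = d y x) \<and> (\<forall>x y z. d x z \<le> d x y + d y z)"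

definition noncorrupt :: "('s \<Rightarrow> real) \<Rightarrow> ('s \<Rightarrow> real) \<Rightarrow> 's set" where
  "noncorrupt R C = {x. R x = C x}"

definition corrupt :: "('s \<Rightarrow> real) \<Rightarrow> ('s \<Rightarrow> real) \<Rightarrow> 's set" where
  "corrupt R C = UNIV - noncorrupt R C"

definition spiky_crmdp ::
  "('s::finite \<Rightarrow> real) \<Rightarrow> ('s \<Rightarrow> real) \<Rightarrow> ('s \<Rightarrow> 's \<Rightarrow> real)
    \<Rightarrow> ('s set \<Rightarrow> 's \<Rightarrow> real) \<Rightarrow> bool" where
  "spiky_crmdp R C d LV \<longleftrightarrow>
     is_metric d \<and>
     (\<forall>A x. LV A x \<ge> 0) \<and>
     (\<forall>A B x. A \<subseteq> B \<longrightarrow> LV A x \<le> LV B x) \<and>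
     noncorrupt R C \<noteq> {} \<and>
     (\<forall>x y. \<bar>R x - R y\<bar> \<le> d x y) \<and>
     (\<forall>x \<in> corrupt R C.
        LV (noncorrupt R C) x > (SUP y\<in>noncorrupt R C. LV UNIV y))"

definition R_low :: "('s::finite \<Rightarrow> real) \<Rightarrow> ('s \<Rightarrow> real) \<Rightarrow> ('s \<Rightarrow> 's \<Rightarrow> real)
    \<Rightarrow> 's \<Rightarrow> real" where
  "R_low R C d x = Max ((\<lambda>y. R y - d x y) ` noncorrupt R C)"

definition policy_value :: "('p \<Rightarrow> 's list pmf) \<Rightarrow> ('s \<Rightarrow> real) \<Rightarrow> 'p \<Rightarrow> real" where
  "policy_value traj r \<pi> = measure_pmf.expectation (traj \<pi>) (\<lambda>\<tau>. sum_list (map r \<tau>))"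

definition optimal_policy :: "('p \<Rightarrow> 's list pmf) \<Rightarrow> ('s \<Rightarrow> real) \<Rightarrow> 'p \<Rightarrow> bool" where
  "optimal_policy traj r \<pi> \<longleftrightarrow> (\<forall>\<pi>'. policy_value traj r \<pi>' \<le> policy_value traj r \<pi>)"

end

theory Submission
  imports Defs
begin

lemma Rlow_le:
  assumes spiky: "spiky_crmdp R C d LV"
  shows "R_low R C d x \<le> R x"
proof -
  have ne: "noncorrupt R C \<noteq> {}" and lip: "\<And>x y. \<bar>R x - R y\<bar> \<le> d x y"
    using spiky unfolding spiky_crmdp_def by auto
  have m: "is_metric d" using spiky unfolding spiky_crmdp_def by auto
  have "\<And>y. R y - d x y \<le> R x"
  proof -
    fix y have "\<bar>R y - R x\<bar> \<le> d y x" by (rule lip)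
    moreover have "d y x = d x y" using m unfolding is_metric_def by auto
    ultimately show "R y - d x y \<le> R x" by linarith
  qed
  then show ?thesis unfolding R_low_def using ne by (subst Max_le_iff) auto
qed

lemma Rlow_eq:
  assumes spiky: "spiky_crmdp R C d LV" and x: "x \<in> noncorrupt R C"
  shows "R_low R C d x = R x"
proof -
  have m: "is_metric d" using spiky unfolding spiky_crmdp_def by auto
  have "R x - d x x \<le> R_low R C d x" unfolding R_low_def
    using x by (intro Max_ge) auto
  moreover have "d x x = 0" using m unfolding is_metric_def by auto
  ultimately show ?thesis using Rlow_le[OF spiky, of x] by linarith
qed

lemma sum_le:
  assumes spiky: "spiky_crmdp R C d LV"
  shows "sum_list (map (R_low R C d) \<tau>) \<le> sum_list (map R \<tau>)"
  by (induction \<tau>) (auto intro: add_mono Rlow_le[OF spiky])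

theorem proposition3:
  fixes R C :: "'s::finite \<Rightarrow> real"
    and d :: "'s \<Rightarrow> 's \<Rightarrow> real"
    and LV :: "'s set \<Rightarrow> 's \<Rightarrow> real"
    and traj :: "'p \<Rightarrow> 's list pmf"
    and \<pi>star :: 'p
  assumes spiky: "spiky_crmdp R C d LV"
    and finite_value: "\<And>\<pi> (r :: 's \<Rightarrow> real).
          integrable (measure_pmf (traj \<pi>)) (\<lambda>\<tau>. sum_list (map r \<tau>))"
    and opt_star: "optimal_policy traj R \<pi>star"
    and no_corrupt: "\<forall>\<tau> \<in> set_pmf (traj \<pi>star). set \<tau> \<inter> corrupt R C = {}"
  shows "\<forall>\<pi>. optimal_policy traj (R_low R C d) \<pi> \<longrightarrow> optimal_policy traj R \<pi>"
proof (intro allI impI)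
  fix \<pi> assume opt: "optimal_policy traj (R_low R C d) \<pi>"
  have le: "policy_value traj (R_low R C d) p \<le> policy_value traj R p" for p
    unfolding policy_value_def
    by (rule integral_mono[OF finite_value finite_value sum_le[OF spiky]])
  have eq: "policy_value traj (R_low R C d) \<pi>star = policy_value traj R \<pi>star"
    unfolding policy_value_def
  proof (rule integral_cong_AE)
    show "AE \<tau> in measure_pmf (traj \<pi>star). sum_list (map (R_low R C d) \<tau>) = sum_list (map R \<tau>)"
    proof (rule AE_pmfI)
      fix \<tau> assume "\<tau> \<in> set_pmf (traj \<pi>star)"
      then have "set \<tau> \<subseteq> noncorrupt R C" using no_corrupt unfolding corrupt_def by auto
      then show "sum_list (map (R_low R C d) \<tau>) = sum_list (map R \<tau>)"
        by (induction \<tau>) (auto simp: Rlow_eq[OF spiky])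
    qed
  qed auto
  show "optimal_policy traj R \<pi>"
    unfolding optimal_policy_def
  proof
    fix p
    have "policy_value traj R p \<le> policy_value traj R \<pi>star" using opt_star unfolding optimal_policy_def by auto
    also have "\<dots> = policy_value traj (R_low R C d) \<pi>star" using eq by simp
    also have "\<dots> \<le> policy_value traj (R_low R C d) \<pi>" using opt unfolding optimal_policy_def by auto
    also have "\<dots> \<le> policy_value traj R \<pi>" by (rule le)
    finally show "policy_value traj R p \<le> policy_value traj R \<pi>" .
  qed
qed

end
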